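(* Let $X$ be a sofic shift and $\varphi$ a flip for $(X,\sigma_X)$. Then there are a finite set $\mathcal{A}$, a map $\mathcal{L}:\mathcal{A}\to\mathcal{B}_1(X)$ and zero-one $\mathcal{A}\times\mathcal{A}$ matrices $A$ and $J$ with the following properties: (1) $\mathcal{L}_\infty:X_A\to X$ is a factoring; (2) $\mathcal{L}_\infty$ has no graph diamonds; (3) $JA=A^\top J$ and $J^2=I$; (4) $\mathcal{L}_\infty\circ\varphi_{J,A}=\varphi\circ\mathcal{L}_\infty$; (5) if $\delta\in\{0,1\}$, $x\in X$ and $\sigma_X^\delta\varphi(x)=x$, then there is $y\in X_A$ with $\mathcal{L}_\infty(y)=x$ and $\sigma_A^\delta\varphi_{J,A}(y)=y$.
   Context: For a shift space $X$, $\sigma_X$ is the shift map and $\mathcal{B}_1(X)$ is the set of symbols occurring in points of $X$. A flip for $(X,\sigma_X)$ is a homeomorphism $\varphi:X\to X$ with $\varphi\sigma_X=\sigma_X^{-1}\varphi$ and $\varphi^2=\mathrm{id}_X$. For a zero-one $\mathcal{A}\times\mathcal{A}$ matrix $A$, $X_A=\{y\in\mathcal{A}^{\mathbb{Z}}:A(y_i,y_{i+1})=1\ \forall i\in\mathbb{Z}\}$ and $\sigma_A$ is the shift map on $X_A$. $\mathcal{L}_\infty$ is the one-block code $\mathcal{L}_\infty(y)_i=\mathcal{L}(y_i)$; it is a factoring onto $X$ if $\mathcal{L}_\infty(X_A)=X$. $\mathcal{L}_\infty$ has no graph diamonds if there are no two distinct words $a_0\cdots a_n\neq b_0\cdots b_n$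 ($n\ge1$) with $A(a_i,a_{i+1})=A(b_i,b_{i+1})=1$ for all $i<n$, $a_0=b_0$, $a_n=b_n$ and $\mathcal{L}(a_i)=\mathcal{L}(b_i)$ for all $i$. If $J$ is a zero-one matrix with $J^2=I$, it is a symmetric permutation matrix, and $\tau:\mathcal{A}\to\mathcal{A}$ denotes the map with $J(a,\tau(a))=1$; if moreover $JA=A^\top J$, then $\varphi_{J,A}:X_A\to X_A$, $\varphi_{J,A}(y)_i=\tau(y_{-i})$, is a flip for $(X_A,\sigma_A)$. *)

theory Defs
  imports "HOL-Analysis.Analysis"
begin

definition shift_top :: "(int \<Rightarrow> 'b) topology" where
  "shift_top = product_topology (\<lambda>_. discrete_topology UNIV) UNIV"

definition shift :: "(int \<Rightarrow> 'b) \<Rightarrow> (int \<Rightarrow> 'b)" where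
  "shift x = (\<lambda>i. x (i + 1))"

definition shift_inv :: "(int \<Rightarrow> 'b) \<Rightarrow> (int \<Rightarrow> 'b)" where
  "shift_inv x = (\<lambda>i. x (i - 1))"

text \<open>Sofic shift (Lind--Marcus): the set of label sequences of bi-infinite walks
  in a finite edge-labelled graph (edges E, initial/terminal vertex maps, labelling).\<close>
definition sofic :: "(int \<Rightarrow> 'b) set \<Rightarrow> bool" where
  "sofic X \<longleftrightarrow> (\<exists>(E::nat set) (ini::nat \<Rightarrow> nat) (ter::nat \<Rightarrow> nat) (lab::nat \<Rightarrow> 'b).
      finite E \<and>
      X = {(\<lambda>i. lab (p i)) | p. \<forall>i. p i \<in> E \<and> ter (p i) = ini (p (i + 1))})"

definition B1 :: "(int \<Rightarrow> 'b) set \<Rightarrow> 'b set" where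
  "B1 X = {x i | x i. x \<in> X}"

definition is_flip :: "(int \<Rightarrow> 'b) set \<Rightarrow> ((int \<Rightarrow> 'b) \<Rightarrow> (int \<Rightarrow> 'b)) \<Rightarrow> bool" where
  "is_flip X \<phi> \<longleftrightarrow>
     homeomorphic_map (subtopology shift_top X) (subtopology shift_top X) \<phi> \<and>
     (\<forall>x\<in>X. \<phi> (shift x) = shift_inv (\<phi> x)) \<and>
     (\<forall>x\<in>X. \<phi> (\<phi> x) = x)"

definition zero_one_mat :: "nat set \<Rightarrow> (nat \<Rightarrow> nat \<Rightarrow> nat) \<Rightarrow> bool" where
  "zero_one_mat S M \<longleftrightarrow> (\<forall>a\<in>S. \<forall>b\<in>S. M a b \<in> {0, 1})"

definition mat_mult :: "nat set \<Rightarrow> (nat \<Rightarrow> nat \<Rightarrow> nat) \<Rightarrow> (nat \<Rightarrow> nat \<Rightarrow> nat) \<Rightarrow> nat \<Rightarrow> nat \<Rightarrow> nat" where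
  "mat_mult S M N = (\<lambda>a c. \<Sum>b\<in>S. M a b * N b c)"

definition mat_transpose :: "(nat \<Rightarrow> nat \<Rightarrow> nat) \<Rightarrow> nat \<Rightarrow> nat \<Rightarrow> nat" where
  "mat_transpose M = (\<lambda>a b. M b a)"

definition mat_id :: "nat \<Rightarrow> nat \<Rightarrow> nat" where
  "mat_id = (\<lambda>a b. if a = b then 1 else 0)"

definition mat_eq :: "nat set \<Rightarrow> (nat \<Rightarrow> nat \<Rightarrow> nat) \<Rightarrow> (nat \<Rightarrow> nat \<Rightarrow> nat) \<Rightarrow> bool" where
  "mat_eq S M N \<longleftrightarrow> (\<forall>a\<in>S. \<forall>b\<in>S. M a b = N a b)"

definition XA :: "nat set \<Rightarrow> (nat \<Rightarrow> nat \<Rightarrow> nat) \<Rightarrow> (int \<Rightarrow> nat) set" where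
  "XA S A = {y. \<forall>i. y i \<in> S \<and> A (y i) (y (i + 1)) = 1}"

definition L_inf :: "(nat \<Rightarrow> 'b) \<Rightarrow> (int \<Rightarrow> nat) \<Rightarrow> (int \<Rightarrow> 'b)" where
  "L_inf L y = (\<lambda>i. L (y i))"

text \<open>tau a is the unique b with J(a,b) = 1 (J a symmetric permutation matrix).\<close>
definition tau :: "nat set \<Rightarrow> (nat \<Rightarrow> nat \<Rightarrow> nat) \<Rightarrow> nat \<Rightarrow> nat" where
  "tau S J a = (THE b. b \<in> S \<and> J a b = 1)"

definition phiJA :: "nat set \<Rightarrow> (nat \<Rightarrow> nat \<Rightarrow> nat) \<Rightarrow> (int \<Rightarrow> nat) \<Rightarrow> (int \<Rightarrow> nat)" where
  "phiJA S J y = (\<lambda>i. tau S J (y (- i)))"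

definition no_graph_diamonds :: "nat set \<Rightarrow> (nat \<Rightarrow> nat \<Rightarrow> nat) \<Rightarrow> (nat \<Rightarrow> 'b) \<Rightarrow> bool" where
  "no_graph_diamonds S A L \<longleftrightarrow>
     \<not> (\<exists>n\<ge>1. \<exists>as bs. length as = n + 1 \<and> length bs = n + 1 \<and> as \<noteq> bs \<and>
           set as \<subseteq> S \<and> set bs \<subseteq> S \<and>
           (\<forall>i<n. A (as ! i) (as ! (i + 1)) = 1 \<and> A (bs ! i) (bs ! (i + 1)) = 1) \<and>
           as ! 0 = bs ! 0 \<and> as ! n = bs ! n \<and>
           (\<forall>i\<le>n. L (as ! i) = L (bs ! i)))"

end

theory Submission
  imports Defs
begin


lemma uc:
  fixes X :: "(int \<Rightarrow> 'b) set" and \<phi> :: "(int \<Rightarrow> 'b) \<Rightarrow> (int \<Rightarrow> 'b)"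
  assumes cX: "compactin shift_top X"
  and cont: "continuous_map (subtopology shift_top X) (subtopology shift_top X) \<phi>"
  shows "\<exists>N::nat. \<forall>x\<in>X. \<forall>z\<in>X. (\<forall>t. \<bar>t\<bar> \<le> int N \<longrightarrow> x t = z t) \<longrightarrow> \<phi> x 0 = \<phi> z 0"
proof -
  have c1: "continuous_map (subtopology shift_top X) shift_top \<phi>"
    using cont continuous_map_in_subtopology by blast
  have c2: "continuous_map shift_top (discrete_topology UNIV) (\<lambda>x. x 0)"
    unfolding shift_top_def by (rule continuous_map_product_projection) simp
  have c0: "continuous_map (subtopology shift_top X) (discrete_topology UNIV) (\<lambda>z. \<phi> z 0)"
    using continuous_map_compose[OF c1 c2] by (simp add: o_def)
  define \<U> where "\<U> = {B. \<exists>U. B = PiE UNIV U \<and> finite {i. U i \<noteq> UNIV} \<and>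
        (\<forall>z\<in>B\<inter>X. \<forall>z'\<in>B\<inter>X. \<phi> z 0 = \<phi> z' 0)}"
  have opn: "\<forall>B\<in>\<U>. openin shift_top B"
    unfolding \<U>_def shift_top_def by (auto simp: openin_PiE_gen)
  have cov: "X \<subseteq> \<Union>\<U>"
  proof
    fix x assume xX: "x \<in> X"
    have "\<forall>U. openin (subtopology shift_top X) {z \<in> topspace (subtopology shift_top X). \<phi> z 0 \<in> U}"
      using c0 unfolding continuous_map_def by auto
    then have "openin (subtopology shift_top X) {z \<in> topspace (subtopology shift_top X). \<phi> z 0 \<in> {\<phi> x 0}}"
      by blast
    then obtain T where T: "openin shift_top T"
      and TO: "{z \<in> topspace (subtopology shift_top X). \<phi> z 0 \<in> {\<phi> x 0}} = T \<inter> X"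
      by (auto simp: openin_subtopology)
    have tsX: "topspace (subtopology shift_top X) = X"
      by (simp add: shift_top_def)
    have xT: "x \<in> T" using TO xX tsX by auto
    obtain U where U: "finite {i. U i \<noteq> UNIV}" "x \<in> PiE UNIV U" "PiE UNIV U \<subseteq> T"
      using T xT unfolding shift_top_def openin_product_topology_alt by auto
    have "PiE UNIV U \<in> \<U>"
      unfolding \<U>_def
    proof (intro CollectI exI[of _ U] conjI ballI)
      fix z z' assume "z \<in> PiE UNIV U \<inter> X" "z' \<in> PiE UNIV U \<inter> X"
      then have z1: "z \<in> T \<inter> X" and z2: "z' \<in> T \<inter> X" using U by auto
      have "z \<in> {z \<in> topspace (subtopology shift_top X). \<phi> z 0 \<in> {\<phi> x 0}}"
        by (subst TO) (rule z1)
      moreover have "z' \<in> {z \<in> topspace (subtopology shift_top X). \<phi> z 0 \<in> {\<phi> x 0}}"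
        by (subst TO) (rule z2)
      ultimately
      show "\<phi> z 0 = \<phi> z' 0" by (simp only: mem_Collect_eq singleton_iff)
    qed (use U in auto)
    then show "x \<in> \<Union>\<U>" using U by auto
  qed
  obtain F where F: "finite F" "F \<subseteq> \<U>" "X \<subseteq> \<Union>F"
  proof -
    have cc: "\<And>\<V>. (\<forall>B\<in>\<V>. openin shift_top B) \<and> X \<subseteq> \<Union>\<V> \<longrightarrow> (\<exists>F. finite F \<and> F \<subseteq> \<V> \<and> X \<subseteq> \<Union>F)"
      using cX unfolding compactin_def by blast
    show ?thesis using cc[of \<U>] opn cov that by blast
  qed
  have "\<forall>B\<in>F. \<exists>U. B = PiE UNIV U \<and> finite {i. U i \<noteq> UNIV} \<and>
        (\<forall>z\<in>B\<inter>X. \<forall>z'\<in>B\<inter>X. \<phi> z 0 = \<phi> z' 0)"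
    using F unfolding \<U>_def by auto
  then obtain UU where UU: "\<forall>B\<in>F. B = PiE UNIV (UU B) \<and> finite {i. UU B i \<noteq> UNIV} \<and>
        (\<forall>z\<in>B\<inter>X. \<forall>z'\<in>B\<inter>X. \<phi> z 0 = \<phi> z' 0)"
    by metis
  define K where "K = (\<Union>B\<in>F. {i. UU B i \<noteq> UNIV})"
  have fK: "finite K" unfolding K_def using F UU by auto
  define N where "N = Max (insert 0 ((\<lambda>i. nat \<bar>i\<bar>) ` K))"
  have KN: "\<And>i. i \<in> K \<Longrightarrow> \<bar>i\<bar> \<le> int N"
  proof -
    fix i assume "i \<in> K"
    then have "nat \<bar>i\<bar> \<le> N" unfolding N_def using fK by (intro Max_ge) auto
    then show "\<bar>i\<bar> \<le> int N" by linarith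
  qed
  show ?thesis
  proof (intro exI ballI impI)
    fix x z assume xX: "x \<in> X" and zX: "z \<in> X" and ag: "\<forall>t. \<bar>t\<bar> \<le> int N \<longrightarrow> x t = z t"
    obtain B where B: "B \<in> F" "x \<in> B" using F xX by auto
    define U0 where "U0 = UU B"
    have UUB: "B = PiE UNIV (UU B) \<and> finite {i. UU B i \<noteq> UNIV} \<and>
        (\<forall>z\<in>B\<inter>X. \<forall>z'\<in>B\<inter>X. \<phi> z 0 = \<phi> z' 0)" using UU B(1) by (rule bspec)
    have BU: "B = PiE UNIV U0" unfolding U0_def by (rule conjunct1[OF UUB])
    have zz: "z \<in> B"
      unfolding BU PiE_iff
    proof (intro conjI ballI)
      fix i :: int
      show "z i \<in> U0 i"
      proof (cases "U0 i = UNIV")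
        case False
        then have "i \<in> K" unfolding K_def U0_def using B(1) by blast
        then have "z i = x i" using ag KN by auto
        moreover have "x \<in> PiE UNIV U0" using B(2) BU by simp
        ultimately show ?thesis by (simp add: PiE_iff)
      qed simp
    qed simp
    have all: "\<forall>z\<in>B\<inter>X. \<forall>z'\<in>B\<inter>X. \<phi> z 0 = \<phi> z' 0" using UUB by (rule conjunct2[THEN conjunct2])
    have "x \<in> B \<inter> X" using B(2) xX by (rule IntI)
    moreover have "z \<in> B \<inter> X" using zz zX by (rule IntI)
    ultimately show "\<phi> x 0 = \<phi> z 0" using all by (meson bspec)
  qed
qed

lemma sofic_compact:
  fixes E :: "nat set" and lab :: "nat \<Rightarrow> 'b"
  assumes fE: "finite E"
  shows "compactin shift_top {(\<lambda>i. lab (p i)) | p. \<forall>i. p i \<in> E \<and> ter (p i) = ini (p (i + 1))}"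
proof -
  define PT where "PT = product_topology (\<lambda>_::int. discrete_topology (UNIV::nat set)) UNIV"
  define Wk where "Wk = {p::int\<Rightarrow>nat. \<forall>i. p i \<in> E \<and> ter (p i) = ini (p (i + 1))}"
  have c1: "compactin PT (PiE UNIV (\<lambda>_. E))"
    unfolding PT_def compactin_PiE by (auto simp: compactin_discrete_topology fE)
  have sub: "Wk \<subseteq> PiE UNIV (\<lambda>_. E)" unfolding Wk_def by auto
  have cl: "closedin PT Wk"
    unfolding closedin_def
  proof
    show "Wk \<subseteq> topspace PT" unfolding PT_def by simp
    show "openin PT (topspace PT - Wk)"
      unfolding PT_def openin_product_topology_alt
    proof
      fix p assume "p \<in> topspace (product_topology (\<lambda>_::int. discrete_topology (UNIV::nat set)) UNIV) - Wk"
      then obtain i where i: "\<not> (p i \<in> E \<and> ter (p i) = ini (p (i + 1)))" unfolding Wk_def by auto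
      define U where "U = (\<lambda>k. if k = i \<or> k = i + 1 then {p k} else (UNIV::nat set))"
      have "finite {k. U k \<noteq> UNIV}"
        by (rule finite_subset[of _ "{i, i+1}"]) (auto simp: U_def)
      moreover have "p \<in> PiE UNIV U" by (auto simp: U_def)
      moreover have "PiE UNIV U \<subseteq> topspace (product_topology (\<lambda>_::int. discrete_topology (UNIV::nat set)) UNIV) - Wk"
      proof
        fix z assume "z \<in> PiE UNIV U"
        then have "z i = p i" "z (i+1) = p (i+1)" by (auto simp: U_def PiE_iff split: if_splits)
        then show "z \<in> topspace (product_topology (\<lambda>_::int. discrete_topology (UNIV::nat set)) UNIV) - Wk"
          using i unfolding Wk_def by (auto intro!: exI[of _ i])
      qed
      ultimately show "\<exists>U. finite {i \<in> UNIV. U i \<noteq> topspace (discrete_topology UNIV)} \<and>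
             (\<forall>i\<in>UNIV. openin (discrete_topology UNIV) (U i)) \<and> p \<in> Pi\<^sub>E UNIV U \<and>
             Pi\<^sub>E UNIV U \<subseteq> topspace (product_topology (\<lambda>_. discrete_topology UNIV) UNIV) - Wk"
        by (intro exI[of _ U]) auto
    qed
  qed
  have cW: "compactin PT Wk" using closed_compactin[OF c1 sub cl] .
  have cm: "continuous_map PT shift_top (\<lambda>p i. lab (p i))"
    unfolding shift_top_def PT_def continuous_map_componentwise_UNIV
  proof
    fix k :: int
    have "continuous_map (product_topology (\<lambda>_::int. discrete_topology (UNIV::nat set)) UNIV) (discrete_topology UNIV) (lab \<circ> (\<lambda>x. x k))"
      by (rule continuous_map_compose[OF continuous_map_product_projection]) auto
    then show "continuous_map (product_topology (\<lambda>_::int. discrete_topology (UNIV::nat set)) UNIV) (discrete_topology UNIV) (\<lambda>x. lab (x k))"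
      by (simp add: o_def)
  qed
  have "compactin shift_top ((\<lambda>p i. lab (p i)) ` Wk)" using image_compactin[OF cW cm] .
  moreover have "(\<lambda>p i. lab (p i)) ` Wk = {(\<lambda>i. lab (p i)) | p. \<forall>i. p i \<in> E \<and> ter (p i) = ini (p (i + 1))}"
    unfolding Wk_def by auto
  ultimately show ?thesis by simp
qed



fun fwseq :: "(int \<Rightarrow> 'v \<Rightarrow> 'v) \<Rightarrow> 'v \<Rightarrow> nat \<Rightarrow> 'v" where
  "fwseq nx v0 0 = v0"
| "fwseq nx v0 (Suc n) = nx (int n) (fwseq nx v0 n)"

fun bwseq :: "(int \<Rightarrow> 'v \<Rightarrow> 'v) \<Rightarrow> 'v \<Rightarrow> nat \<Rightarrow> 'v" where
  "bwseq pv v0 0 = v0"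
| "bwseq pv v0 (Suc n) = pv (- int n - 1) (bwseq pv v0 n)"

lemma biinf:
  fixes C :: "int \<Rightarrow> 'v set" and R :: "int \<Rightarrow> 'v \<Rightarrow> 'v \<Rightarrow> bool"
  assumes fw: "\<And>i u. u \<in> C i \<Longrightarrow> \<exists>v\<in>C (i+1). R i u v"
    and bw: "\<And>i v. v \<in> C (i+1) \<Longrightarrow> \<exists>u\<in>C i. R i u v"
    and ne: "C 0 \<noteq> {}"
  shows "\<exists>w. \<forall>i. w i \<in> C i \<and> R i (w i) (w (i+1))"
proof -
  define nx where "nx i u = (SOME v. v \<in> C (i+1) \<and> R i u v)" for i u
  define pv where "pv i v = (SOME u. u \<in> C i \<and> R i u v)" for i v
  have nx: "nx i u \<in> C (i+1) \<and> R i u (nx i u)" if "u \<in> C i" for i u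
    unfolding nx_def using fw[OF that] by (metis (mono_tags, lifting) someI_ex)
  have pv: "pv i v \<in> C i \<and> R i (pv i v) v" if "v \<in> C (i+1)" for i v
    unfolding pv_def using bw[OF that] by (metis (mono_tags, lifting) someI_ex)
  obtain v0 where v0: "v0 \<in> C 0" using ne by auto
  have fwC: "fwseq nx v0 n \<in> C (int n)" for n
  proof (induction n)
    case (Suc n)
    then show ?case using nx[of "fwseq nx v0 n" "int n"] by (simp add: add.commute)
  qed (use v0 in simp)
  have bwC: "bwseq pv v0 n \<in> C (- int n)" for n
  proof (induction n)
    case 0 then show ?case using v0 by simp
  next
    case (Suc n)
    have "bwseq pv v0 n \<in> C ((- int n - 1) + 1)" using Suc by simp
    then have "pv (- int n - 1) (bwseq pv v0 n) \<in> C (- int n - 1)" using pv by blast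
    moreover have "- int (Suc n) = - int n - 1" by simp
    ultimately show ?case by (simp only: bwseq.simps)
  qed
  define w where "w i = (if 0 \<le> i then fwseq nx v0 (nat i) else bwseq pv v0 (nat (- i)))" for i
  have "w i \<in> C i \<and> R i (w i) (w (i+1))" for i
  proof (cases "0 \<le> i")
    case True
    have "w i = fwseq nx v0 (nat i)" using True by (simp add: w_def)
    moreover have "w (i+1) = nx i (fwseq nx v0 (nat i))"
      using True by (simp add: w_def nat_add_distrib)
    moreover have "fwseq nx v0 (nat i) \<in> C i" using fwC[of "nat i"] True by simp
    ultimately show ?thesis using nx by simp
  next
    case False
    show ?thesis
    proof (cases "i = -1")
      case True
      have "w i = pv (-1) v0" using True by (simp add: w_def numeral_eq_Suc)
      moreover have "w (i+1) = v0" using True by (simp add: w_def)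
      ultimately show ?thesis using pv[of v0 "-1"] v0 True by simp
    next
      case F2: False
      have i2: "i \<le> -2" using False F2 by simp
      define m where "m = nat (-i) - 1"
      have m: "nat (-i) = Suc m" "int m = - i - 1" using i2 unfolding m_def by linarith+
      have wi: "w i = pv i (bwseq pv v0 m)"
        using False m by (simp add: w_def)
      have wi1: "w (i+1) = bwseq pv v0 m"
      proof -
        have "nat (- (i+1)) = m" using m by simp
        then show ?thesis using i2 by (simp add: w_def)
      qed
      have "- int m = i + 1" using m by simp
      then have "bwseq pv v0 m \<in> C (i+1)" using bwC[of m] by metis
      then show ?thesis using pv wi wi1 by simp
    qed
  qed
  then show ?thesis by blast
qed

lemma win_shift:
  fixes g :: "nat \<Rightarrow> int \<Rightarrow> 'x" and M :: int
  assumes rel: "\<And>k t. k < n \<Longrightarrow> \<bar>t\<bar> \<le> M \<Longrightarrow> \<bar>t+1\<bar> \<le> M \<Longrightarrow> g (Suc k) t = g k (t+1)"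
  shows "k + d \<le> n \<Longrightarrow> \<bar>t\<bar> \<le> M \<Longrightarrow> \<bar>t - int d\<bar> \<le> M \<Longrightarrow> g (k + d) (t - int d) = g k t"
proof (induction d)
  case 0 then show ?case by simp
next
  case (Suc d)
  have "g (k + Suc d) (t - int (Suc d)) = g (k + d) (t - int (Suc d) + 1)"
    using rel[of "k+d" "t - int (Suc d)"] Suc.prems by simp
  also have "\<dots> = g (k + d) (t - int d)" by simp
  also have "\<dots> = g k t" using Suc by simp
  finally show ?case .
qed

lemma win_det:
  fixes g h :: "nat \<Rightarrow> int \<Rightarrow> 'x" and M :: int
  assumes relg: "\<And>k t. k < n \<Longrightarrow> \<bar>t\<bar> \<le> M \<Longrightarrow> \<bar>t+1\<bar> \<le> M \<Longrightarrow> g (Suc k) t = g k (t+1)"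
    and relh: "\<And>k t. k < n \<Longrightarrow> \<bar>t\<bar> \<le> M \<Longrightarrow> \<bar>t+1\<bar> \<le> M \<Longrightarrow> h (Suc k) t = h k (t+1)"
    and e0: "\<And>t. \<bar>t\<bar> \<le> M \<Longrightarrow> g 0 t = h 0 t"
    and en: "\<And>t. \<bar>t\<bar> \<le> M \<Longrightarrow> g n t = h n t"
    and ec: "\<And>k. k \<le> n \<Longrightarrow> g k 0 = h k 0"
    and k: "k \<le> n" and t: "\<bar>t\<bar> \<le> M"
  shows "g k t = h k t"
proof -
  note sg = win_shift[where n=n and g=g and M=M, OF relg]
  note sh = win_shift[where n=n and g=h and M=M, OF relh]
  consider "0 \<le> int k + t \<and> int k + t \<le> int n \<and> 0 \<le> t"
    | "0 \<le> int k + t \<and> int k + t \<le> int n \<and> t < 0" | "int k + t < 0" | "int k + t > int n"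
    by linarith
  then show ?thesis
  proof cases
    case 1
    define d where "d = nat t"
    have "g (k + d) (t - int d) = g k t" "h (k + d) (t - int d) = h k t"
      using sg[of k d t] sh[of k d t] 1 t k by (auto simp: d_def)
    moreover have "t - int d = 0" using 1 by (simp add: d_def)
    moreover have "k + d \<le> n" using 1 by (simp add: d_def) linarith
    ultimately show ?thesis using ec by metis
  next
    case 2
    define d where "d = nat (- t)"
    define k' where "k' = k - d"
    have kk: "k' + d = k" "0 - int d = t" using 2 by (auto simp: d_def k'_def)
    have "g (k' + d) (0 - int d) = g k' 0" "h (k' + d) (0 - int d) = h k' 0"
      using sg[of k' d 0] sh[of k' d 0] 2 t k kk by auto
    then show ?thesis using ec[of k'] kk k by (simp add: k'_def)
  next
    case 3
    have "g (0 + k) (t + int k - int k) = g 0 (t + int k)" "h (0 + k) (t + int k - int k) = h 0 (t + int k)"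
      using sg[of 0 k "t + int k"] sh[of 0 k "t + int k"] 3 t k by auto
    then show ?thesis using e0[of "t + int k"] 3 t by simp
  next
    case 4
    define d where "d = n - k"
    have "g (k + d) (t - int d) = g k t" "h (k + d) (t - int d) = h k t"
      using sg[of k d t] sh[of k d t] 4 t k by (auto simp: d_def)
    moreover have "k + d = n" using k by (simp add: d_def)
    moreover have "\<bar>t - int d\<bar> \<le> M" using 4 t k by (simp add: d_def)
    ultimately show ?thesis using en by metis
  qed
qed

lemma fw_det:
  assumes "f 0 = h 0" "\<And>k. k < n \<Longrightarrow> f (Suc k) = F k (f k) \<and> h (Suc k) = F k (h k)"
  shows "k \<le> n \<Longrightarrow> f k = h k"
  by (induction k) (use assms in auto)

lemma bw_det:
  assumes "f n = h n" "\<And>k. k < n \<Longrightarrow> f k = G k (f (Suc k)) \<and> h k = G k (h (Suc k))"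
  shows "k \<le> n \<Longrightarrow> f k = h k"
proof -
  have "\<forall>k. n - k = d \<longrightarrow> k \<le> n \<longrightarrow> f k = h k" for d
  proof (induction d)
    case 0 then show ?case using assms(1) by auto
  next
    case (Suc d)
    show ?case
    proof (intro allI impI)
      fix k assume "n - k = Suc d" "k \<le> n"
      then have "k < n" "n - Suc k = d" by auto
      then show "f k = h k" using Suc assms(2)[of k] by auto
    qed
  qed
  then show "k \<le> n \<Longrightarrow> f k = h k" by blast
qed



locale FS =
  fixes E :: "nat set" and ini ter :: "nat \<Rightarrow> nat" and lab :: "nat \<Rightarrow> 'b"
    and X :: "(int \<Rightarrow> 'b) set" and \<phi> :: "(int \<Rightarrow> 'b) \<Rightarrow> (int \<Rightarrow> 'b)" and N :: nat
  assumes finE: "finite E"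
  and Xdef: "X = {(\<lambda>i. lab (p i)) | p. \<forall>i. p i \<in> E \<and> ter (p i) = ini (p (i + 1))}"
  and phiX: "\<And>x. x \<in> X \<Longrightarrow> \<phi> x \<in> X"
  and phiphi: "\<And>x. x \<in> X \<Longrightarrow> \<phi> (\<phi> x) = x"
  and phishift: "\<And>x. x \<in> X \<Longrightarrow> \<phi> (shift x) = shift_inv (\<phi> x)"
  and UC: "\<And>x z. x \<in> X \<Longrightarrow> z \<in> X \<Longrightarrow> (\<forall>t. \<bar>t\<bar> \<le> int N \<longrightarrow> x t = z t) \<Longrightarrow> \<phi> x 0 = \<phi> z 0"
begin

definition Pset :: "int \<Rightarrow> (int \<Rightarrow> 'b) \<Rightarrow> nat set" where
  "Pset j x = {v. \<exists>p. (\<forall>i<j. p i \<in> E \<and> lab (p i) = x i) \<and> (\<forall>i<j-1. ter (p i) = ini (p (i+1))) \<and> ter (p (j-1)) = v}"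
definition Rset :: "int \<Rightarrow> (int \<Rightarrow> 'b) \<Rightarrow> nat set" where
  "Rset j x = {v. \<exists>p. (\<forall>i\<ge>j. p i \<in> E \<and> lab (p i) = x i \<and> ter (p i) = ini (p (i+1))) \<and> ini (p j) = v}"
definition dlt :: "nat set \<Rightarrow> 'b \<Rightarrow> nat set" where
  "dlt P a = {ter e | e. e \<in> E \<and> ini e \<in> P \<and> lab e = a}"
definition dinv :: "nat set \<Rightarrow> 'b \<Rightarrow> nat set" where
  "dinv R a = {ini e | e. e \<in> E \<and> lab e = a \<and> ter e \<in> R}"
definition W :: "(int \<Rightarrow> 'b) \<Rightarrow> int \<Rightarrow> int \<Rightarrow> 'b" where
  "W z k = restrict (\<lambda>t. z (k+t)) {- int N .. int N}"
definition st where
  "st x j = (W x j, W (\<phi> x) (-j), Pset j x, Rset j x, Pset (-j) (\<phi> x), Rset (-j) (\<phi> x))"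
definition T where "T = {st x j | x j. x \<in> X}"
definition Ac where "Ac a b \<longleftrightarrow> (\<exists>x\<in>X. \<exists>j. a = st x j \<and> b = st x (j+1))"

definition c1 :: "(int \<Rightarrow> 'b) \<times> (int \<Rightarrow> 'b) \<times> nat set \<times> nat set \<times> nat set \<times> nat set \<Rightarrow> int \<Rightarrow> 'b"
  where "c1 a = fst a"
definition c2 :: "(int \<Rightarrow> 'b) \<times> (int \<Rightarrow> 'b) \<times> nat set \<times> nat set \<times> nat set \<times> nat set \<Rightarrow> int \<Rightarrow> 'b"
  where "c2 a = fst (snd a)"
definition c3 :: "(int \<Rightarrow> 'b) \<times> (int \<Rightarrow> 'b) \<times> nat set \<times> nat set \<times> nat set \<times> nat set \<Rightarrow> nat set"
  where "c3 a = fst (snd (snd a))"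
definition c4 :: "(int \<Rightarrow> 'b) \<times> (int \<Rightarrow> 'b) \<times> nat set \<times> nat set \<times> nat set \<times> nat set \<Rightarrow> nat set"
  where "c4 a = fst (snd (snd (snd a)))"
definition c5 :: "(int \<Rightarrow> 'b) \<times> (int \<Rightarrow> 'b) \<times> nat set \<times> nat set \<times> nat set \<times> nat set \<Rightarrow> nat set"
  where "c5 a = fst (snd (snd (snd (snd a))))"
definition c6 :: "(int \<Rightarrow> 'b) \<times> (int \<Rightarrow> 'b) \<times> nat set \<times> nat set \<times> nat set \<times> nat set \<Rightarrow> nat set"
  where "c6 a = snd (snd (snd (snd (snd a))))"

definition Lc :: "(int \<Rightarrow> 'b) \<times> (int \<Rightarrow> 'b) \<times> nat set \<times> nat set \<times> nat set \<times> nat set \<Rightarrow> 'b"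
  where "Lc a = fst a 0"
definition tauc :: "(int \<Rightarrow> 'b) \<times> (int \<Rightarrow> 'b) \<times> nat set \<times> nat set \<times> nat set \<times> nat set \<Rightarrow> (int \<Rightarrow> 'b) \<times> (int \<Rightarrow> 'b) \<times> nat set \<times> nat set \<times> nat set \<times> nat set"
  where "tauc a = (fst (snd a), fst a, fst (snd (snd (snd (snd a)))), snd (snd (snd (snd (snd a)))), fst (snd (snd a)), fst (snd (snd (snd a))))"

lemma c_st: "c1 (st x j) = W x j" "c2 (st x j) = W (\<phi> x) (-j)" "c3 (st x j) = Pset j x"
  "c4 (st x j) = Rset j x" "c5 (st x j) = Pset (-j) (\<phi> x)" "c6 (st x j) = Rset (-j) (\<phi> x)"
  by (simp_all add: st_def c1_def c2_def c3_def c4_def c5_def c6_def)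

lemma c_eq: "c1 a = c1 b \<Longrightarrow> c2 a = c2 b \<Longrightarrow> c3 a = c3 b \<Longrightarrow> c4 a = c4 b \<Longrightarrow> c5 a = c5 b \<Longrightarrow> c6 a = c6 b \<Longrightarrow> a = b"
  by (simp add: c1_def c2_def c3_def c4_def c5_def c6_def prod_eq_iff)

lemma Lc_c1: "Lc a = c1 a 0" by (simp add: Lc_def c1_def)

lemma W_in: "\<bar>t\<bar> \<le> int N \<Longrightarrow> W z k t = z (k + t)"
  by (simp add: W_def abs_le_iff)
lemma W_out: "\<not> \<bar>t\<bar> \<le> int N \<Longrightarrow> W z k t = undefined"
  by (auto simp add: W_def abs_le_iff)

lemma Lc_st: "Lc (st x j) = x j"
  by (simp add: Lc_c1 c_st W_in)

lemma Pset_step: "Pset (j+1) x = dlt (Pset j x) (x j)"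
proof
  show "Pset (j+1) x \<subseteq> dlt (Pset j x) (x j)"
  proof
    fix v assume "v \<in> Pset (j+1) x"
    then obtain p where p: "\<forall>i<j+1. p i \<in> E \<and> lab (p i) = x i" "\<forall>i<j. ter (p i) = ini (p (i+1))"
      "ter (p j) = v" unfolding Pset_def by auto
    have "ini (p j) \<in> Pset j x" unfolding Pset_def
      using p by (intro CollectI exI[of _ p]) (auto dest: spec[of _ "j-1"])
    then show "v \<in> dlt (Pset j x) (x j)" unfolding dlt_def using p by auto
  qed
next
  show "dlt (Pset j x) (x j) \<subseteq> Pset (j+1) x"
  proof
    fix v assume "v \<in> dlt (Pset j x) (x j)"
    then obtain e p where e: "e \<in> E" "lab e = x j" "v = ter e"
      and p: "\<forall>i<j. p i \<in> E \<and> lab (p i) = x i" "\<forall>i<j-1. ter (p i) = ini (p (i+1))" "ter (p (j-1)) = ini e"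
      unfolding dlt_def Pset_def by auto
    define p' where "p' = p(j := e)"
    have "\<forall>i<j+1. p' i \<in> E \<and> lab (p' i) = x i" using p e by (auto simp: p'_def)
    moreover have "\<forall>i<j. ter (p' i) = ini (p' (i+1))"
    proof (intro allI impI)
      fix i assume "i < j"
      then show "ter (p' i) = ini (p' (i+1))"
        using p by (cases "i = j - 1") (auto simp: p'_def)
    qed
    moreover have "ter (p' j) = v" using e by (simp add: p'_def)
    ultimately show "v \<in> Pset (j+1) x" unfolding Pset_def by auto
  qed
qed

lemma Rset_step: "Rset j x = dinv (Rset (j+1) x) (x j)"
proof
  show "Rset j x \<subseteq> dinv (Rset (j+1) x) (x j)"
  proof
    fix v assume "v \<in> Rset j x"
    then obtain p where p: "\<forall>i\<ge>j. p i \<in> E \<and> lab (p i) = x i \<and> ter (p i) = ini (p (i+1))" "ini (p j) = v"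
      unfolding Rset_def by auto
    have "ter (p j) \<in> Rset (j+1) x" unfolding Rset_def
      using p by (intro CollectI exI[of _ p]) auto
    then show "v \<in> dinv (Rset (j+1) x) (x j)" unfolding dinv_def using p by (auto intro!: exI[of _ "p j"])
  qed
next
  show "dinv (Rset (j+1) x) (x j) \<subseteq> Rset j x"
  proof
    fix v assume "v \<in> dinv (Rset (j+1) x) (x j)"
    then obtain e p where e: "e \<in> E" "lab e = x j" "v = ini e"
      and p: "\<forall>i\<ge>j+1. p i \<in> E \<and> lab (p i) = x i \<and> ter (p i) = ini (p (i+1))" "ini (p (j+1)) = ter e"
      unfolding dinv_def Rset_def by auto
    define p' where "p' = p(j := e)"
    have "\<forall>i\<ge>j. p' i \<in> E \<and> lab (p' i) = x i \<and> ter (p' i) = ini (p' (i+1))"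
    proof (intro allI impI)
      fix i assume "j \<le> i"
      then show "p' i \<in> E \<and> lab (p' i) = x i \<and> ter (p' i) = ini (p' (i+1))"
        using p e by (cases "i = j") (auto simp: p'_def)
    qed
    moreover have "ini (p' j) = v" using e by (simp add: p'_def)
    ultimately show "v \<in> Rset j x" unfolding Rset_def by auto
  qed
qed

lemma Pset_shift: "Pset j (\<lambda>i. x (i + c)) = Pset (j + c) x"
proof
  show "Pset j (\<lambda>i. x (i + c)) \<subseteq> Pset (j + c) x"
  proof
    fix v assume "v \<in> Pset j (\<lambda>i. x (i + c))"
    then obtain p where p: "\<forall>i<j. p i \<in> E \<and> lab (p i) = x (i + c)" "\<forall>i<j-1. ter (p i) = ini (p (i+1))"
      "ter (p (j-1)) = v" unfolding Pset_def by auto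
    show "v \<in> Pset (j + c) x" unfolding Pset_def
    proof (intro CollectI exI[of _ "\<lambda>i. p (i - c)"] conjI allI impI)
      fix i assume "i < j + c" then show "p (i - c) \<in> E" "lab (p (i - c)) = x i" using p(1)[rule_format, of "i - c"] by auto
    next
      fix i assume "i < j + c - 1" then show "ter (p (i - c)) = ini (p (i + 1 - c))"
        using p(2)[rule_format, of "i - c"] by (simp add: algebra_simps)
    next
      show "ter (p (j + c - 1 - c)) = v" using p(3) by simp
    qed
  qed
next
  show "Pset (j + c) x \<subseteq> Pset j (\<lambda>i. x (i + c))"
  proof
    fix v assume "v \<in> Pset (j + c) x"
    then obtain p where p: "\<forall>i<j+c. p i \<in> E \<and> lab (p i) = x i" "\<forall>i<j+c-1. ter (p i) = ini (p (i+1))"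
      "ter (p (j+c-1)) = v" unfolding Pset_def by auto
    show "v \<in> Pset j (\<lambda>i. x (i + c))" unfolding Pset_def
    proof (intro CollectI exI[of _ "\<lambda>i. p (i + c)"] conjI allI impI)
      fix i assume "i < j" then show "p (i + c) \<in> E" "lab (p (i + c)) = x (i + c)" using p(1)[rule_format, of "i + c"] by auto
    next
      fix i assume "i < j - 1" then show "ter (p (i + c)) = ini (p (i + 1 + c))"
        using p(2)[rule_format, of "i + c"] by (simp add: algebra_simps)
    next
      show "ter (p (j - 1 + c)) = v" using p(3) by (simp add: algebra_simps)
    qed
  qed
qed

lemma Rset_shift: "Rset j (\<lambda>i. x (i + c)) = Rset (j + c) x"
proof
  show "Rset j (\<lambda>i. x (i + c)) \<subseteq> Rset (j + c) x"
  proof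
    fix v assume "v \<in> Rset j (\<lambda>i. x (i + c))"
    then obtain p where p: "\<forall>i\<ge>j. p i \<in> E \<and> lab (p i) = x (i + c) \<and> ter (p i) = ini (p (i+1))"
      "ini (p j) = v" unfolding Rset_def by auto
    show "v \<in> Rset (j + c) x" unfolding Rset_def
    proof (intro CollectI exI[of _ "\<lambda>i. p (i - c)"] conjI allI impI)
      fix i assume "j + c \<le> i" then show "p (i - c) \<in> E" "lab (p (i - c)) = x i" "ter (p (i - c)) = ini (p (i + 1 - c))"
        using p(1)[rule_format, of "i - c"] by (auto simp: algebra_simps)
    next
      show "ini (p (j + c - c)) = v" using p(2) by simp
    qed
  qed
next
  show "Rset (j + c) x \<subseteq> Rset j (\<lambda>i. x (i + c))"
  proof
    fix v assume "v \<in> Rset (j + c) x"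
    then obtain p where p: "\<forall>i\<ge>j+c. p i \<in> E \<and> lab (p i) = x i \<and> ter (p i) = ini (p (i+1))"
      "ini (p (j+c)) = v" unfolding Rset_def by auto
    show "v \<in> Rset j (\<lambda>i. x (i + c))" unfolding Rset_def
    proof (intro CollectI exI[of _ "\<lambda>i. p (i + c)"] conjI allI impI)
      fix i assume "j \<le> i" then show "p (i + c) \<in> E" "lab (p (i + c)) = x (i + c)" "ter (p (i + c)) = ini (p (i + 1 + c))"
        using p(1)[rule_format, of "i + c"] by (auto simp: algebra_simps)
    next
      show "ini (p (j + c)) = v" using p(2) by simp
    qed
  qed
qed

lemma X_walk: "x \<in> X \<Longrightarrow> \<exists>p. (\<forall>i. p i \<in> E \<and> ter (p i) = ini (p (i + 1))) \<and> x = (\<lambda>i. lab (p i))"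
  using Xdef by auto

lemma walk_X: "\<forall>i. p i \<in> E \<and> ter (p i) = ini (p (i + 1)) \<Longrightarrow> (\<lambda>i. lab (p i)) \<in> X"
  using Xdef by auto

lemma PR_ne: "x \<in> X \<Longrightarrow> Pset j x \<inter> Rset j x \<noteq> {}"
proof -
  assume "x \<in> X"
  then obtain p where p: "\<forall>i. p i \<in> E \<and> ter (p i) = ini (p (i + 1))" "x = (\<lambda>i. lab (p i))"
    using X_walk by blast
  have "ini (p j) \<in> Pset j x" unfolding Pset_def
    using p by (intro CollectI exI[of _ p]) (auto dest: spec[of _ "j-1"])
  moreover have "ini (p j) \<in> Rset j x" unfolding Rset_def
    using p by (intro CollectI exI[of _ p]) auto
  ultimately show ?thesis by blast
qed

lemma X_shift: "x \<in> X \<Longrightarrow> (\<lambda>i. x (i + c)) \<in> X"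
proof -
  assume "x \<in> X"
  then obtain p where p: "\<forall>i. p i \<in> E \<and> ter (p i) = ini (p (i + 1))" "x = (\<lambda>i. lab (p i))"
    using X_walk by blast
  have "\<forall>i. p (i + c) \<in> E \<and> ter (p (i + c)) = ini (p (i + 1 + c))"
    using p(1) by (metis add.commute add.left_commute)
  then have "(\<lambda>i. lab (p (i + c))) \<in> X" using walk_X[of "\<lambda>i. p (i + c)"] by simp
  then show ?thesis using p(2) by simp
qed

lemma phi_shift_nat: "x \<in> X \<Longrightarrow> \<phi> (\<lambda>i. x (i + int n)) k = \<phi> x (k - int n)"
proof (induction n arbitrary: k)
  case 0 then show ?case by simp
next
  case (Suc n)
  have eq: "(\<lambda>i. x (i + int (Suc n))) = shift (\<lambda>i. x (i + int n))"
    by (simp add: shift_def algebra_simps)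
  have "\<phi> (\<lambda>i. x (i + int (Suc n))) k = shift_inv (\<phi> (\<lambda>i. x (i + int n))) k"
    unfolding eq using phishift X_shift Suc.prems by metis
  also have "\<dots> = \<phi> x (k - int (Suc n))" using Suc by (simp add: shift_inv_def algebra_simps)
  finally show ?case .
qed

lemma phi_shift: "x \<in> X \<Longrightarrow> \<phi> (\<lambda>i. x (i + c)) k = \<phi> x (k - c)"
proof (cases "0 \<le> c")
  case True
  assume x: "x \<in> X"
  then show ?thesis using phi_shift_nat[OF x, of "nat c"] True by simp
next
  case False
  assume x: "x \<in> X"
  define n where "n = nat (- c)"
  have c: "c = - int n" using False by (simp add: n_def)
  define z where "z = (\<lambda>i. x (i + c))"
  have zX: "z \<in> X" unfolding z_def using X_shift[OF x] .
  have "x = (\<lambda>i. z (i + int n))" by (simp add: z_def c)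
  then have "\<phi> x (k + int n) = \<phi> z k" using phi_shift_nat[OF zX, of n "k + int n"] by simp
  then show ?thesis by (simp add: z_def c)
qed

lemma F_prop:
  assumes "x \<in> X" "z \<in> X" "\<forall>t. \<bar>t\<bar> \<le> int N \<longrightarrow> x (j + t) = z (j' + t)"
  shows "\<phi> x (-j) = \<phi> z (-j')"
proof -
  have "\<phi> (\<lambda>i. x (i + j)) 0 = \<phi> (\<lambda>i. z (i + j')) 0"
    using UC[OF X_shift[OF assms(1)] X_shift[OF assms(2)]] assms(3) by (metis add.commute)
  then show ?thesis using phi_shift[OF assms(1)] phi_shift[OF assms(2)] by simp
qed

end


context FS begin

lemma X_lab: "x \<in> X \<Longrightarrow> x i \<in> lab ` E"
  using X_walk by blast

lemma Pset_sub: "Pset j x \<subseteq> ter ` E"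
  unfolding Pset_def by (auto dest!: spec[of _ "j-1"])

lemma Rset_sub: "Rset j x \<subseteq> ini ` E"
  unfolding Rset_def by auto

lemma W_PiE: "x \<in> X \<Longrightarrow> W x j \<in> PiE {- int N .. int N} (\<lambda>_. lab ` E)"
  unfolding W_def by (auto simp: restrict_PiE_iff X_lab)

lemma finite_T: "finite T"
proof -
  let ?A = "PiE {- int N .. int N} (\<lambda>_. lab ` E)"
  have "T \<subseteq> ?A \<times> ?A \<times> Pow (ter ` E) \<times> Pow (ini ` E) \<times> Pow (ter ` E) \<times> Pow (ini ` E)"
  proof
    fix a assume "a \<in> T"
    then obtain x j where x: "x \<in> X" and a: "a = st x j" unfolding T_def by blast
    show "a \<in> ?A \<times> ?A \<times> Pow (ter ` E) \<times> Pow (ini ` E) \<times> Pow (ter ` E) \<times> Pow (ini ` E)"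
      unfolding a st_def using W_PiE[OF x] W_PiE[OF phiX[OF x]] Pset_sub Rset_sub by simp
  qed
  moreover have "finite (?A \<times> ?A \<times> Pow (ter ` E) \<times> Pow (ini ` E) \<times> Pow (ter ` E) \<times> Pow (ini ` E))"
    using finE by (intro finite_cartesian_product finite_PiE) auto
  ultimately show ?thesis by (rule finite_subset)
qed

lemma tauc_st: "x \<in> X \<Longrightarrow> tauc (st x j) = st (\<phi> x) (-j)"
  by (simp add: tauc_def st_def phiphi)

lemma tauc_tauc: "tauc (tauc a) = a"
  by (simp add: tauc_def)

lemma T_tauc: "a \<in> T \<Longrightarrow> tauc a \<in> T"
  unfolding T_def using tauc_st phiX by blast

lemma Ac_tauc: "Ac a b \<Longrightarrow> Ac (tauc b) (tauc a)"
proof -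
  assume "Ac a b"
  then obtain x j where x: "x \<in> X" "a = st x j" "b = st x (j+1)" unfolding Ac_def by blast
  have e1: "- (j + 1) + 1 = - j" by simp
  have "tauc b = st (\<phi> x) (- (j + 1))" "tauc a = st (\<phi> x) (- j)"
    using x tauc_st by simp_all
  then have "tauc b = st (\<phi> x) (- (j + 1))" "tauc a = st (\<phi> x) (- (j + 1) + 1)"
    unfolding e1 by simp_all
  then show ?thesis unfolding Ac_def using phiX[OF x(1)] by blast
qed

lemma Ac_T: "Ac a b \<Longrightarrow> a \<in> T \<and> b \<in> T"
  unfolding Ac_def T_def by blast

lemma shift_eq: "shift x = (\<lambda>i. x (i + 1))" by (simp add: shift_def)
lemma shift_inv_eq: "shift_inv x = (\<lambda>i. x (i + (-1)))" by (simp add: shift_inv_def)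

lemma W_shift: "W (\<lambda>i. z (i + c)) k = W z (k + c)"
  unfolding W_def by (intro ext) (simp add: restrict_def ac_simps)

lemma st_shift: "x \<in> X \<Longrightarrow> st (shift x) j = st x (j+1)"
proof -
  assume x: "x \<in> X"
  have a2: "\<phi> (shift x) = (\<lambda>i. \<phi> x (i + (-1)))" using phishift[OF x] by (simp add: shift_inv_eq)
  have e: "-j + -1 = -(j+1)" by simp
  show ?thesis
    unfolding st_def a2 unfolding shift_eq W_shift Pset_shift Rset_shift e by (rule refl)
qed

lemma Ac_W1: "Ac a b \<Longrightarrow> \<bar>t\<bar> \<le> int N \<Longrightarrow> \<bar>t+1\<bar> \<le> int N \<Longrightarrow> c1 b t = c1 a (t+1)"
proof -
  assume "Ac a b" "\<bar>t\<bar> \<le> int N" "\<bar>t+1\<bar> \<le> int N"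
  moreover obtain x j where x: "a = st x j" "b = st x (j+1)" using \<open>Ac a b\<close> unfolding Ac_def by blast
  moreover have "j + 1 + t = j + (t + 1)" by simp
  ultimately show ?thesis by (simp only: c_st W_in)
qed

lemma Ac_W2: "Ac a b \<Longrightarrow> \<bar>t\<bar> \<le> int N \<Longrightarrow> \<bar>t-1\<bar> \<le> int N \<Longrightarrow> c2 b t = c2 a (t-1)"
proof -
  assume "Ac a b" "\<bar>t\<bar> \<le> int N" "\<bar>t-1\<bar> \<le> int N"
  moreover obtain x j where x: "a = st x j" "b = st x (j+1)" using \<open>Ac a b\<close> unfolding Ac_def by blast
  moreover have "- (j + 1) + t = - j + (t - 1)" by simp
  ultimately show ?thesis by (simp only: c_st W_in)
qed

lemma Ac_P: "Ac a b \<Longrightarrow> c3 b = dlt (c3 a) (Lc a)"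
  unfolding Ac_def by (auto simp: c_st Lc_st Pset_step)

lemma Ac_R: "Ac a b \<Longrightarrow> c4 a = dinv (c4 b) (Lc a)"
proof -
  assume "Ac a b"
  then obtain x j where x: "a = st x j" "b = st x (j+1)" unfolding Ac_def by blast
  show ?thesis unfolding x c_st Lc_st by (rule Rset_step)
qed

lemma Ac_P2: "Ac a b \<Longrightarrow> c5 a = dlt (c5 b) (c2 b 0)"
proof -
  assume "Ac a b"
  then obtain x j where x: "x \<in> X" "a = st x j" "b = st x (j+1)" unfolding Ac_def by blast
  have "Pset (- j) (\<phi> x) = dlt (Pset (- (j + 1)) (\<phi> x)) (\<phi> x (- (j+1)))"
    using Pset_step[of "- (j+1)" "\<phi> x"] by simp
  then show ?thesis using x by (simp add: c_st W_in)
qed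

lemma Ac_R2: "Ac a b \<Longrightarrow> c6 b = dinv (c6 a) (c2 b 0)"
proof -
  assume "Ac a b"
  then obtain x j where x: "x \<in> X" "a = st x j" "b = st x (j+1)" unfolding Ac_def by blast
  have "Rset (- (j + 1)) (\<phi> x) = dinv (Rset (- j) (\<phi> x)) (\<phi> x (- (j+1)))"
    using Rset_step[of "- (j+1)" "\<phi> x"] by simp
  then show ?thesis using x by (simp add: c_st W_in)
qed

lemma T_phic: "a \<in> T \<Longrightarrow> a' \<in> T \<Longrightarrow> c1 a = c1 a' \<Longrightarrow> c2 a 0 = c2 a' 0"
proof -
  assume "a \<in> T" "a' \<in> T" and eq: "c1 a = c1 a'"
  then obtain x j x' j' where x: "x \<in> X" "a = st x j" "x' \<in> X" "a' = st x' j'" unfolding T_def by blast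
  have "\<forall>t. \<bar>t\<bar> \<le> int N \<longrightarrow> x (j + t) = x' (j' + t)"
  proof (intro allI impI)
    fix t :: int assume t: "\<bar>t\<bar> \<le> int N"
    have "W x j t = W x' j' t" using eq x by (simp add: c_st)
    then show "x (j + t) = x' (j' + t)" using t by (simp add: W_in)
  qed
  then have "\<phi> x (-j) = \<phi> x' (-j')" using F_prop x by blast
  then show ?thesis using x by (simp add: c_st W_in)
qed

lemma T_ext: "a \<in> T \<Longrightarrow> \<not> \<bar>t\<bar> \<le> int N \<Longrightarrow> c1 a t = undefined \<and> c2 a t = undefined"
  unfolding T_def by (auto simp: c_st W_out)

lemma T_ne: "a \<in> T \<Longrightarrow> c3 a \<inter> c4 a \<noteq> {}"
  unfolding T_def using PR_ne by (auto simp: c_st)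

definition path where "path y \<longleftrightarrow> (\<forall>i. y i \<in> T \<and> Ac (y i) (y (i+1)))"

lemma st_path: "x \<in> X \<Longrightarrow> path (st x)"
  unfolding path_def T_def Ac_def by blast

lemma path_X: "path y \<Longrightarrow> (\<lambda>i. Lc (y i)) \<in> X"
proof -
  assume py: "path y"
  define C where "C i = c3 (y i) \<inter> c4 (y i)" for i
  define R where "R i u v = (\<exists>e\<in>E. ini e = u \<and> ter e = v \<and> lab e = Lc (y i))" for i u v
  have fw: "\<exists>v\<in>C (i+1). R i u v" if "u \<in> C i" for i u
  proof -
    have A: "Ac (y i) (y (i+1))" using py path_def by blast
    have "u \<in> dinv (c4 (y (i+1))) (Lc (y i))" using that A Ac_R unfolding C_def by auto
    then obtain e where e: "e \<in> E" "lab e = Lc (y i)" "ter e \<in> c4 (y (i+1))" "u = ini e"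
      unfolding dinv_def by auto
    have "ter e \<in> dlt (c3 (y i)) (Lc (y i))" unfolding dlt_def using e that C_def by auto
    then have "ter e \<in> c3 (y (i+1))" using Ac_P[OF A] by simp
    then show ?thesis using e unfolding C_def R_def by auto
  qed
  have bw: "\<exists>u\<in>C i. R i u v" if "v \<in> C (i+1)" for i v
  proof -
    have A: "Ac (y i) (y (i+1))" using py path_def by blast
    have "v \<in> dlt (c3 (y i)) (Lc (y i))" using that A Ac_P unfolding C_def by auto
    then obtain e where e: "e \<in> E" "lab e = Lc (y i)" "ini e \<in> c3 (y i)" "v = ter e"
      unfolding dlt_def by auto
    have "ini e \<in> dinv (c4 (y (i+1))) (Lc (y i))" unfolding dinv_def using e that C_def by auto
    then have "ini e \<in> c4 (y i)" using Ac_R[OF A] by simp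
    then show ?thesis using e unfolding C_def R_def by auto
  qed
  have ne: "C 0 \<noteq> {}" unfolding C_def using T_ne py path_def by blast
  obtain w where w: "\<forall>i. w i \<in> C i \<and> R i (w i) (w (i+1))" using biinf[of C R, OF fw bw ne] by blast
  define q where "q i = (SOME e. e \<in> E \<and> ini e = w i \<and> ter e = w (i+1) \<and> lab e = Lc (y i))" for i
  have q: "q i \<in> E \<and> ini (q i) = w i \<and> ter (q i) = w (i+1) \<and> lab (q i) = Lc (y i)" for i
  proof -
    have "\<exists>e. e \<in> E \<and> ini e = w i \<and> ter e = w (i+1) \<and> lab e = Lc (y i)" using w R_def by blast
    then show ?thesis unfolding q_def by (rule someI_ex)
  qed
  have "(\<lambda>i. lab (q i)) \<in> X" using q by (intro walk_X) auto
  then show ?thesis using q by simp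
qed

lemma image_path: "{(\<lambda>i. Lc (y i)) | y. path y} = X"
proof
  show "{(\<lambda>i. Lc (y i)) | y. path y} \<subseteq> X" using path_X by blast
  show "X \<subseteq> {(\<lambda>i. Lc (y i)) | y. path y}"
  proof
    fix x assume x: "x \<in> X"
    have "(\<lambda>i. Lc (st x i)) = x" by (simp add: Lc_st)
    then show "x \<in> {(\<lambda>i. Lc (y i)) | y. path y}" using st_path[OF x]
      by (intro CollectI exI[of _ "st x"]) simp
  qed
qed

lemma path_window: "path y \<Longrightarrow> \<bar>t\<bar> \<le> int N \<Longrightarrow> c1 (y m) t = Lc (y (m + t))"
proof -
  assume py: "path y" and t: "\<bar>t\<bar> \<le> int N"
  have rel: "\<And>k t. k < n \<Longrightarrow> \<bar>t\<bar> \<le> int N \<Longrightarrow> \<bar>t+1\<bar> \<le> int N \<Longrightarrow>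
      (\<lambda>k t. c1 (y (mm + int k)) t) (Suc k) t = (\<lambda>k t. c1 (y (mm + int k)) t) k (t+1)" for n mm
  proof -
    fix k t n mm assume "k < (n::nat)" "\<bar>t\<bar> \<le> int N" "\<bar>t+1\<bar> \<le> int N"
    have A: "Ac (y (mm + int k)) (y (mm + int k + 1))" using py unfolding path_def by blast
    have eq: "mm + int (Suc k) = mm + int k + 1" by simp
    have "c1 (y (mm + int k + 1)) t = c1 (y (mm + int k)) (t + 1)"
      using Ac_W1[OF A] \<open>\<bar>t\<bar> \<le> int N\<close> \<open>\<bar>t+1\<bar> \<le> int N\<close> by blast
    then show "(\<lambda>k t. c1 (y (mm + int k)) t) (Suc k) t = (\<lambda>k t. c1 (y (mm + int k)) t) k (t+1)"
      unfolding eq by simp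
  qed
  show ?thesis
  proof (cases "0 \<le> t")
    case True
    have "c1 (y (m + int (0 + nat t))) (t - int (nat t)) = c1 (y (m + int 0)) t"
      using win_shift[where g="\<lambda>k t. c1 (y (m + int k)) t" and M="int N" and n="Suc (nat t)" and k=0 and d="nat t" and t=t, OF rel] t True by simp
    then show ?thesis using True by (simp add: Lc_c1)
  next
    case False
    have "c1 (y ((m + t) + int (0 + nat (-t)))) (0 - int (nat (-t))) = c1 (y ((m + t) + int 0)) 0"
      using win_shift[where g="\<lambda>k s. c1 (y (m + t + int k)) s" and M="int N" and n="Suc (nat (-t))" and k=0 and d="nat (-t)" and t=0, OF rel] t False by simp
    then show ?thesis using False by (simp add: Lc_c1)
  qed
qed

lemma path_flip: "path y \<Longrightarrow> (\<lambda>i. Lc (tauc (y (-i)))) = \<phi> (\<lambda>i. Lc (y i))"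
proof
  fix i
  assume py: "path y"
  let ?x' = "\<lambda>i. Lc (y i)"
  have x'X: "?x' \<in> X" using path_X[OF py] .
  obtain x j where x: "x \<in> X" "y (-i) = st x j" using py unfolding path_def T_def by blast
  have "\<forall>t. \<bar>t\<bar> \<le> int N \<longrightarrow> x (j + t) = ?x' (-i + t)"
  proof (intro allI impI)
    fix t :: int assume t: "\<bar>t\<bar> \<le> int N"
    have "x (j + t) = c1 (y (-i)) t" using x t by (simp add: c_st W_in)
    also have "\<dots> = ?x' (-i + t)" using path_window[OF py t] by simp
    finally show "x (j + t) = ?x' (-i + t)" .
  qed
  then have "\<phi> x (-j) = \<phi> ?x' (- (-i))" using F_prop[OF x(1) x'X] by blast
  moreover have "Lc (tauc (y (-i))) = \<phi> x (-j)"
    using x by (simp add: tauc_st Lc_st)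
  ultimately show "Lc (tauc (y (-i))) = \<phi> ?x' i" by simp
qed

lemma fix_lift:
  assumes "\<delta> \<in> {0, 1::nat}" "x \<in> X" "(shift ^^ \<delta>) (\<phi> x) = x"
  shows "\<exists>y. path y \<and> (\<lambda>i. Lc (y i)) = x \<and> (shift ^^ \<delta>) (\<lambda>i. tauc (y (-i))) = y"
proof (intro exI conjI)
  show "path (st x)" using st_path[OF assms(2)] .
  show "(\<lambda>i. Lc (st x i)) = x" by (simp add: Lc_st)
  show "(shift ^^ \<delta>) (\<lambda>i. tauc (st x (-i))) = st x"
  proof (cases "\<delta> = 0")
    case True
    then have "\<phi> x = x" using assms by simp
    then show ?thesis using True tauc_st[OF assms(2)] by simp
  next
    case False
    then have d: "\<delta> = 1" using assms by simp
    then have sx: "shift (\<phi> x) = x" using assms by simp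
    show ?thesis
    proof
      fix i
      have "(shift ^^ \<delta>) (\<lambda>i. tauc (st x (-i))) i = tauc (st x (- (i+1)))"
        using d by (simp add: shift_def)
      also have "\<dots> = st (\<phi> x) (i + 1)" using tauc_st[OF assms(2), of "- (i+1)"] by (simp add: add.commute)
      also have "\<dots> = st (shift (\<phi> x)) i" using st_shift[OF phiX[OF assms(2)], of i] by (rule sym)
      also have "\<dots> = st x i" using sx by simp
      finally show "(shift ^^ \<delta>) (\<lambda>i. tauc (st x (-i))) i = st x i" .
    qed
  qed
qed

end


context FS begin

lemma nodiam:
  assumes la: "length as = n+1" and lb: "length bs = n+1" and sa: "set as \<subseteq> T" and sb: "set bs \<subseteq> T"
    and tr: "\<forall>i<n. Ac (as!i) (as!(i+1)) \<and> Ac (bs!i) (bs!(i+1))"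
    and h0: "as!0 = bs!0" and hn: "as!n = bs!n" and hl: "\<forall>i\<le>n. Lc (as!i) = Lc (bs!i)"
  shows "as = bs"
proof -
  have Ta: "as!k \<in> T" "bs!k \<in> T" if "k \<le> n" for k
  proof -
    have "k < length as" "k < length bs" using that la lb by simp_all
    then show "as!k \<in> T" "bs!k \<in> T" using sa sb nth_mem by blast+
  qed
  have trA: "Ac (as!k) (as!(Suc k))" "Ac (bs!k) (bs!(Suc k))" if "k < n" for k
    using tr that by auto
  have c1eq: "c1 (as!k) = c1 (bs!k)" if k: "k \<le> n" for k
  proof
    fix t
    show "c1 (as!k) t = c1 (bs!k) t"
    proof (cases "\<bar>t\<bar> \<le> int N")
      case True
      show ?thesis
      proof (rule win_det[where g="\<lambda>k t. c1 (as!k) t" and h="\<lambda>k t. c1 (bs!k) t" and M="int N" and n=n])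
        show "\<And>k t. k < n \<Longrightarrow> \<bar>t\<bar> \<le> int N \<Longrightarrow> \<bar>t+1\<bar> \<le> int N \<Longrightarrow> c1 (as ! Suc k) t = c1 (as ! k) (t+1)"
          using trA Ac_W1 by blast
        show "\<And>k t. k < n \<Longrightarrow> \<bar>t\<bar> \<le> int N \<Longrightarrow> \<bar>t+1\<bar> \<le> int N \<Longrightarrow> c1 (bs ! Suc k) t = c1 (bs ! k) (t+1)"
          using trA Ac_W1 by blast
        show "\<And>t. c1 (as ! 0) t = c1 (bs ! 0) t" using h0 by simp
        show "\<And>t. c1 (as ! n) t = c1 (bs ! n) t" using hn by simp
        show "\<And>k. k \<le> n \<Longrightarrow> c1 (as ! k) 0 = c1 (bs ! k) 0" using hl by (simp add: Lc_c1)
      qed (use k True in auto)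
    next
      case False
      then show ?thesis using T_ext[OF Ta(1)[OF k]] T_ext[OF Ta(2)[OF k]] by simp
    qed
  qed
  have c2eq: "c2 (as!k) = c2 (bs!k)" if k: "k \<le> n" for k
  proof
    fix t
    show "c2 (as!k) t = c2 (bs!k) t"
    proof (cases "\<bar>t\<bar> \<le> int N")
      case True
      have rel: "c2 (cs ! Suc k) (-t) = c2 (cs ! k) (- (t+1))"
        if "Ac (cs!k) (cs!(Suc k))" "\<bar>t\<bar> \<le> int N" "\<bar>t+1\<bar> \<le> int N" for cs k t
        using Ac_W2[OF that(1), of "-t"] that(2,3) by simp
      have "c2 (as!k) (- (-t)) = c2 (bs!k) (- (-t))"
      proof (rule win_det[where g="\<lambda>k t. c2 (as!k) (-t)" and h="\<lambda>k t. c2 (bs!k) (-t)" and M="int N" and n=n])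
        show "\<And>k t. k < n \<Longrightarrow> \<bar>t\<bar> \<le> int N \<Longrightarrow> \<bar>t+1\<bar> \<le> int N \<Longrightarrow> c2 (as ! Suc k) (-t) = c2 (as ! k) (-(t+1))"
          using trA rel by blast
        show "\<And>k t. k < n \<Longrightarrow> \<bar>t\<bar> \<le> int N \<Longrightarrow> \<bar>t+1\<bar> \<le> int N \<Longrightarrow> c2 (bs ! Suc k) (-t) = c2 (bs ! k) (-(t+1))"
          using trA rel by blast
        show "\<And>t. c2 (as ! 0) (-t) = c2 (bs ! 0) (-t)" using h0 by simp
        show "\<And>t. c2 (as ! n) (-t) = c2 (bs ! n) (-t)" using hn by simp
        show "\<And>k. k \<le> n \<Longrightarrow> c2 (as ! k) (-0) = c2 (bs ! k) (-0)"
          using T_phic Ta c1eq by simp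
      qed (use k True in auto)
      then show ?thesis by simp
    next
      case False
      then show ?thesis using T_ext[OF Ta(1)[OF k]] T_ext[OF Ta(2)[OF k]] by simp
    qed
  qed
  have c3eq: "c3 (as!k) = c3 (bs!k)" if k: "k \<le> n" for k
  proof (rule fw_det[where f="\<lambda>k. c3 (as!k)" and h="\<lambda>k. c3 (bs!k)" and n=n and F="\<lambda>k P. dlt P (Lc (as!k))"])
    show "c3 (as!0) = c3 (bs!0)" using h0 by simp
    fix j assume j: "j < n"
    have "Lc (bs!j) = Lc (as!j)" using hl j by simp
    then show "c3 (as!Suc j) = dlt (c3 (as!j)) (Lc (as!j)) \<and> c3 (bs!Suc j) = dlt (c3 (bs!j)) (Lc (as!j))"
      using Ac_P[OF trA(1)[OF j]] Ac_P[OF trA(2)[OF j]] by simp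
  qed (rule k)
  have c6eq: "c6 (as!k) = c6 (bs!k)" if k: "k \<le> n" for k
  proof (rule fw_det[where f="\<lambda>k. c6 (as!k)" and h="\<lambda>k. c6 (bs!k)" and n=n and F="\<lambda>k R. dinv R (c2 (as!(Suc k)) 0)"])
    show "c6 (as!0) = c6 (bs!0)" using h0 by simp
    fix j assume j: "j < n"
    have "c2 (bs!Suc j) = c2 (as!Suc j)" using c2eq[of "Suc j"] j by simp
    then show "c6 (as!Suc j) = dinv (c6 (as!j)) (c2 (as!(Suc j)) 0) \<and> c6 (bs!Suc j) = dinv (c6 (bs!j)) (c2 (as!(Suc j)) 0)"
      using Ac_R2[OF trA(1)[OF j]] Ac_R2[OF trA(2)[OF j]] by simp
  qed (rule k)
  have c4eq: "c4 (as!k) = c4 (bs!k)" if k: "k \<le> n" for k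
  proof (rule bw_det[where f="\<lambda>k. c4 (as!k)" and h="\<lambda>k. c4 (bs!k)" and n=n and G="\<lambda>k R. dinv R (Lc (as!k))"])
    show "c4 (as!n) = c4 (bs!n)" using hn by simp
    fix j assume j: "j < n"
    have "Lc (bs!j) = Lc (as!j)" using hl j by simp
    then show "c4 (as!j) = dinv (c4 (as!Suc j)) (Lc (as!j)) \<and> c4 (bs!j) = dinv (c4 (bs!Suc j)) (Lc (as!j))"
      using Ac_R[OF trA(1)[OF j]] Ac_R[OF trA(2)[OF j]] by simp
  qed (rule k)
  have c5eq: "c5 (as!k) = c5 (bs!k)" if k: "k \<le> n" for k
  proof (rule bw_det[where f="\<lambda>k. c5 (as!k)" and h="\<lambda>k. c5 (bs!k)" and n=n and G="\<lambda>k P. dlt P (c2 (as!(Suc k)) 0)"])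
    show "c5 (as!n) = c5 (bs!n)" using hn by simp
    fix j assume j: "j < n"
    have "c2 (bs!Suc j) = c2 (as!Suc j)" using c2eq[of "Suc j"] j by simp
    then show "c5 (as!j) = dlt (c5 (as!Suc j)) (c2 (as!(Suc j)) 0) \<and> c5 (bs!j) = dlt (c5 (bs!Suc j)) (c2 (as!(Suc j)) 0)"
      using Ac_P2[OF trA(1)[OF j]] Ac_P2[OF trA(2)[OF j]] by simp
  qed (rule k)
  show ?thesis
  proof (rule nth_equalityI)
    show "length as = length bs" using la lb by simp
    fix k assume "k < length as"
    then have k: "k \<le> n" using la by simp
    show "as!k = bs!k" using c_eq c1eq[OF k] c2eq[OF k] c3eq[OF k] c4eq[OF k] c5eq[OF k] c6eq[OF k] by blast
  qed
qed

end


lemma transfer: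
  fixes T :: "'c set" and Lc :: "'c \<Rightarrow> 'b" and Ac :: "'c \<Rightarrow> 'c \<Rightarrow> bool" and tauc :: "'c \<Rightarrow> 'c"
    and X :: "(int \<Rightarrow> 'b) set" and \<phi> :: "(int \<Rightarrow> 'b) \<Rightarrow> (int \<Rightarrow> 'b)"
  assumes fT: "finite T"
  and tT: "\<And>a. a \<in> T \<Longrightarrow> tauc a \<in> T" and tt: "\<And>a. a \<in> T \<Longrightarrow> tauc (tauc a) = a"
  and At: "\<And>a b. a \<in> T \<Longrightarrow> b \<in> T \<Longrightarrow> Ac a b \<Longrightarrow> Ac (tauc b) (tauc a)"
  and LB: "Lc ` T \<subseteq> B1 X"
  and img: "{(\<lambda>i. Lc (y i)) | y. \<forall>i. y i \<in> T \<and> Ac (y i) (y (i+1))} = X"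
  and nd: "\<And>n as bs. length as = n+1 \<Longrightarrow> length bs = n+1 \<Longrightarrow> set as \<subseteq> T \<Longrightarrow> set bs \<subseteq> T \<Longrightarrow>
      \<forall>i<n. Ac (as!i) (as!(i+1)) \<and> Ac (bs!i) (bs!(i+1)) \<Longrightarrow> as!0 = bs!0 \<Longrightarrow> as!n = bs!n \<Longrightarrow>
      \<forall>i\<le>n. Lc (as!i) = Lc (bs!i) \<Longrightarrow> as = bs"
  and fl: "\<And>y. \<forall>i. y i \<in> T \<and> Ac (y i) (y (i+1)) \<Longrightarrow> (\<lambda>i. Lc (tauc (y (-i)))) = \<phi> (\<lambda>i. Lc (y i))"
  and fx: "\<And>\<delta> x. \<delta> \<in> {0,1::nat} \<Longrightarrow> x \<in> X \<Longrightarrow> (shift ^^ \<delta>) (\<phi> x) = x \<Longrightarrow>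
      \<exists>y. (\<forall>i. y i \<in> T \<and> Ac (y i) (y (i+1))) \<and> (\<lambda>i. Lc (y i)) = x \<and> (shift ^^ \<delta>) (\<lambda>i. tauc (y (-i))) = y"
  shows "\<exists>(S::nat set) (L::nat \<Rightarrow> 'b) (A::nat \<Rightarrow> nat \<Rightarrow> nat) (J::nat \<Rightarrow> nat \<Rightarrow> nat).
    finite S \<and> L ` S \<subseteq> B1 X \<and> zero_one_mat S A \<and> zero_one_mat S J \<and>
    L_inf L ` XA S A = X \<and>
    no_graph_diamonds S A L \<and>
    mat_eq S (mat_mult S J A) (mat_mult S (mat_transpose A) J) \<and>
    mat_eq S (mat_mult S J J) mat_id \<and>
    (\<forall>y\<in>XA S A. L_inf L (phiJA S J y) = \<phi> (L_inf L y)) \<and>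
    (\<forall>\<delta>::nat\<in>{0,1}. \<forall>x\<in>X. (shift ^^ \<delta>) (\<phi> x) = x \<longrightarrow>
        (\<exists>y\<in>XA S A. L_inf L y = x \<and> (shift ^^ \<delta>) (phiJA S J y) = y))"
proof -
  obtain f where f: "bij_betw f T {0..<card T}" using ex_bij_betw_finite_nat[OF fT] by blast
  define S where "S = f ` T"
  define g where "g = inv_into T f"
  have gf: "g (f a) = a" if "a \<in> T" for a using bij_betw_inv_into_left[OF f that] g_def by simp
  have gS: "g s \<in> T" if "s \<in> S" for s using that S_def gf by auto
  have fg: "f (g s) = s" if "s \<in> S" for s using that S_def gf by auto
  have fS: "f a \<in> S" if "a \<in> T" for a using that S_def by auto
  define L where "L s = Lc (g s)" for s
  define A where "A s t = (if s \<in> S \<and> t \<in> S \<and> Ac (g s) (g t) then 1 else 0::nat)" for s t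
  define \<tau> where "\<tau> s = f (tauc (g s))" for s
  define J where "J s t = (if s \<in> S \<and> t \<in> S \<and> t = \<tau> s then 1 else 0::nat)" for s t
  have \<tau>S: "\<tau> s \<in> S" if "s \<in> S" for s using that \<tau>_def fS tT gS by simp
  have g\<tau>: "g (\<tau> s) = tauc (g s)" if "s \<in> S" for s using that \<tau>_def gf tT gS by simp
  have \<tau>\<tau>: "\<tau> (\<tau> s) = s" if "s \<in> S" for s using that g\<tau> \<tau>_def tt gS fg by simp
  have tauSJ: "tau S J s = \<tau> s" if "s \<in> S" for s
    unfolding tau_def by (rule the_equality) (use that \<tau>S in \<open>auto simp: J_def split: if_splits\<close>)
  have finS: "finite S" using fT S_def by simp
  have XAc: "y \<in> XA S A \<longleftrightarrow> (\<forall>i. y i \<in> S \<and> Ac (g (y i)) (g (y (i+1))))" for y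
    unfolding XA_def A_def by auto
  have path_g: "\<forall>i. (\<lambda>i. g (y i)) i \<in> T \<and> Ac ((\<lambda>i. g (y i)) i) ((\<lambda>i. g (y i)) (i+1))" if "y \<in> XA S A" for y
    using that XAc gS by auto
  have path_f: "(\<lambda>i. f (y i)) \<in> XA S A" if "\<forall>i. y i \<in> T \<and> Ac (y i) (y (i+1))" for y
    unfolding XAc using that fS gf by auto
  have phiJA_eq: "phiJA S J y = (\<lambda>i. \<tau> (y (-i)))" if "y \<in> XA S A" for y
    unfolding phiJA_def using that XAc tauSJ by auto
  have P5: "L_inf L ` XA S A = X"
  proof
    show "L_inf L ` XA S A \<subseteq> X"
    proof
      fix x assume "x \<in> L_inf L ` XA S A"
      then obtain y where y: "y \<in> XA S A" "x = L_inf L y" by auto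
      have "x = (\<lambda>i. Lc ((\<lambda>i. g (y i)) i))" using y by (simp add: L_inf_def L_def)
      then have "x \<in> {(\<lambda>i. Lc (y i)) | y. \<forall>i. y i \<in> T \<and> Ac (y i) (y (i+1))}"
        using path_g[OF y(1)] by (intro CollectI exI[of _ "\<lambda>i. g (y i)"] conjI) simp_all
      then show "x \<in> X" using img by simp
    qed
    show "X \<subseteq> L_inf L ` XA S A"
    proof
      fix x assume "x \<in> X"
      then have "x \<in> {(\<lambda>i. Lc (y i)) | y. \<forall>i. y i \<in> T \<and> Ac (y i) (y (i+1))}" using img by simp
      then obtain y where y: "\<forall>i. y i \<in> T \<and> Ac (y i) (y (i+1))" "x = (\<lambda>i. Lc (y i))" by blast
      have "L_inf L (\<lambda>i. f (y i)) = x" using y gf by (simp add: L_inf_def L_def)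
      then show "x \<in> L_inf L ` XA S A" using path_f[OF y(1)] by blast
    qed
  qed
  have P6: "no_graph_diamonds S A L"
    unfolding no_graph_diamonds_def
  proof (intro notI, elim exE conjE)
    fix n as bs
    assume h: "1 \<le> n" "length as = n + 1" "length bs = n + 1" "as \<noteq> bs" "set as \<subseteq> S" "set bs \<subseteq> S"
      "\<forall>i<n. A (as ! i) (as ! (i + 1)) = 1 \<and> A (bs ! i) (bs ! (i + 1)) = 1"
      "as ! 0 = bs ! 0" "as ! n = bs ! n" "\<forall>i\<le>n. L (as ! i) = L (bs ! i)"
    have "map g as = map g bs"
    proof (rule nd[of "map g as" n "map g bs"])
      show "length (map g as) = n + 1" "length (map g bs) = n + 1" using h by simp_all
      show "set (map g as) \<subseteq> T" "set (map g bs) \<subseteq> T" using h gS by auto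
      show "\<forall>i<n. Ac (map g as ! i) (map g as ! (i + 1)) \<and> Ac (map g bs ! i) (map g bs ! (i + 1))"
        using h by (auto simp: A_def split: if_splits)
      show "map g as ! 0 = map g bs ! 0" "map g as ! n = map g bs ! n" using h by simp_all
      show "\<forall>i\<le>n. Lc (map g as ! i) = Lc (map g bs ! i)" using h by (auto simp: L_def)
    qed
    then have "map f (map g as) = map f (map g bs)" by simp
    moreover have "map f (map g as) = as" "map f (map g bs) = bs"
      using h fg by (auto intro!: map_idI)
    ultimately show False using h by simp
  qed
  have JA: "mat_mult S J M a c = M (\<tau> a) c" if "a \<in> S" for M a c
  proof -
    have "mat_mult S J M a c = (\<Sum>b\<in>S. if b = \<tau> a then M b c else 0)"
      unfolding mat_mult_def by (rule sum.cong) (use that in \<open>auto simp: J_def\<close>)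
    also have "\<dots> = M (\<tau> a) c" using finS \<tau>S[OF that] by simp
    finally show ?thesis .
  qed
  have AJ: "mat_mult S M J a c = M a (\<tau> c)" if "c \<in> S" for M a c
  proof -
    have "mat_mult S M J a c = (\<Sum>b\<in>S. if b = \<tau> c then M a b else 0)"
      unfolding mat_mult_def
    proof (rule sum.cong)
      fix b assume b: "b \<in> S"
      have "(c = \<tau> b) \<longleftrightarrow> (b = \<tau> c)" using \<tau>\<tau>[OF b] \<tau>\<tau>[OF that] by auto
      then show "M a b * J b c = (if b = \<tau> c then M a b else 0)" using b that by (auto simp: J_def)
    qed simp
    also have "\<dots> = M a (\<tau> c)" using finS \<tau>S[OF that] by simp
    finally show ?thesis .
  qed
  have P7: "mat_eq S (mat_mult S J A) (mat_mult S (mat_transpose A) J)"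
    unfolding mat_eq_def
  proof (intro ballI)
    fix a c assume a: "a \<in> S" and c: "c \<in> S"
    have ga: "g a \<in> T" and gc: "g c \<in> T" using gS a c by auto
    have "Ac (tauc (g a)) (g c) \<longleftrightarrow> Ac (tauc (g c)) (g a)"
    proof
      assume "Ac (tauc (g a)) (g c)"
      then have "Ac (tauc (g c)) (tauc (tauc (g a)))" using At[OF tT[OF ga] gc] by simp
      then show "Ac (tauc (g c)) (g a)" using tt[OF ga] by simp
    next
      assume "Ac (tauc (g c)) (g a)"
      then have "Ac (tauc (g a)) (tauc (tauc (g c)))" using At[OF tT[OF gc] ga] by simp
      then show "Ac (tauc (g a)) (g c)" using tt[OF gc] by simp
    qed
    then have "A (\<tau> a) c = A (\<tau> c) a" using a c \<tau>S g\<tau> by (simp add: A_def)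
    then show "mat_mult S J A a c = mat_mult S (mat_transpose A) J a c"
      using JA[OF a] AJ[OF c] by (simp add: mat_transpose_def)
  qed
  have P8: "mat_eq S (mat_mult S J J) mat_id"
    unfolding mat_eq_def
  proof (intro ballI)
    fix a c assume a: "a \<in> S" and c: "c \<in> S"
    have "(c = \<tau> (\<tau> a)) \<longleftrightarrow> (c = a)" using \<tau>\<tau> a by simp
    then show "mat_mult S J J a c = mat_id a c" using JA[OF a] a c \<tau>S by (auto simp: J_def mat_id_def)
  qed
  have P9: "\<forall>y\<in>XA S A. L_inf L (phiJA S J y) = \<phi> (L_inf L y)"
  proof
    fix y assume y: "y \<in> XA S A"
    have yS: "y i \<in> S" for i using y XAc by simp
    have "L_inf L (phiJA S J y) = (\<lambda>i. Lc (tauc ((\<lambda>i. g (y i)) (-i))))"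
      unfolding phiJA_eq[OF y] L_inf_def L_def using g\<tau> yS by simp
    also have "\<dots> = \<phi> (\<lambda>i. Lc ((\<lambda>i. g (y i)) i))" by (rule fl[OF path_g[OF y]])
    also have "\<dots> = \<phi> (L_inf L y)" by (simp add: L_inf_def L_def)
    finally show "L_inf L (phiJA S J y) = \<phi> (L_inf L y)" .
  qed
  have P10: "\<forall>\<delta>::nat\<in>{0,1}. \<forall>x\<in>X. (shift ^^ \<delta>) (\<phi> x) = x \<longrightarrow>
        (\<exists>y\<in>XA S A. L_inf L y = x \<and> (shift ^^ \<delta>) (phiJA S J y) = y)"
  proof (intro ballI impI)
    fix \<delta> :: nat and x assume d: "\<delta> \<in> {0,1}" and x: "x \<in> X" and fxx: "(shift ^^ \<delta>) (\<phi> x) = x"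
    obtain y where y: "\<forall>i. y i \<in> T \<and> Ac (y i) (y (i+1))" "(\<lambda>i. Lc (y i)) = x"
      "(shift ^^ \<delta>) (\<lambda>i. tauc (y (-i))) = y" using fx[OF d x fxx] by blast
    define y' where "y' = (\<lambda>i. f (y i))"
    have y'XA: "y' \<in> XA S A" using path_f[OF y(1)] y'_def by simp
    have "L_inf L y' = x" using y gf by (auto simp: L_inf_def L_def y'_def)
    moreover have "(shift ^^ \<delta>) (phiJA S J y') = y'"
    proof -
      have ph: "phiJA S J y' = (\<lambda>i. f (tauc (y (-i))))"
        unfolding phiJA_eq[OF y'XA] unfolding \<tau>_def y'_def using gf y by simp
      show ?thesis
      proof (cases "\<delta> = 0")
        case True
        then have eq: "(\<lambda>i. tauc (y (-i))) = y" using y(3) by simp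
        have e0: "tauc (y (-i)) = y i" for i using fun_cong[OF eq, of i] by simp
        show ?thesis unfolding ph unfolding y'_def using True by (simp only: e0 funpow_0)
      next
        case False
        then have d1: "\<delta> = 1" using d by simp
        then have "shift (\<lambda>i. tauc (y (-i))) = y" using y(3) by simp
        then have e: "tauc (y (-(i+1))) = y i" for i unfolding shift_def by (rule fun_cong)
        have "shift (\<lambda>i. f (tauc (y (-i)))) = (\<lambda>i. f (y i))"
          unfolding shift_def by (rule ext) (simp only: e)
        then show ?thesis unfolding ph unfolding y'_def using d1 by simp
      qed
    qed
    ultimately show "\<exists>y\<in>XA S A. L_inf L y = x \<and> (shift ^^ \<delta>) (phiJA S J y) = y" using y'XA by blast
  qed
  have zA: "zero_one_mat S A" "zero_one_mat S J" by (auto simp: zero_one_mat_def A_def J_def)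
  have LBS: "L ` S \<subseteq> B1 X" using LB gS by (auto simp: L_def)
  show ?thesis by (intro exI[of _ S] exI[of _ L] exI[of _ A] exI[of _ J] conjI finS LBS zA P5 P6 P7 P8 P9 P10)
qed


theorem proposition2p1:
  fixes X :: "(int \<Rightarrow> 'b) set" and \<phi> :: "(int \<Rightarrow> 'b) \<Rightarrow> (int \<Rightarrow> 'b)"
  assumes "sofic X" and "is_flip X \<phi>"
  shows "\<exists>(S::nat set) (L::nat \<Rightarrow> 'b) (A::nat \<Rightarrow> nat \<Rightarrow> nat) (J::nat \<Rightarrow> nat \<Rightarrow> nat).
    finite S \<and> L ` S \<subseteq> B1 X \<and> zero_one_mat S A \<and> zero_one_mat S J \<and>
    L_inf L ` XA S A = X \<and>
    no_graph_diamonds S A L \<and>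
    mat_eq S (mat_mult S J A) (mat_mult S (mat_transpose A) J) \<and>
    mat_eq S (mat_mult S J J) mat_id \<and>
    (\<forall>y\<in>XA S A. L_inf L (phiJA S J y) = \<phi> (L_inf L y)) \<and>
    (\<forall>\<delta>::nat\<in>{0,1}. \<forall>x\<in>X. (shift ^^ \<delta>) (\<phi> x) = x \<longrightarrow>
        (\<exists>y\<in>XA S A. L_inf L y = x \<and> (shift ^^ \<delta>) (phiJA S J y) = y))"
proof -
  obtain E :: "nat set" and ini ter :: "nat \<Rightarrow> nat" and lab :: "nat \<Rightarrow> 'b" where
    fE: "finite E" and Xd: "X = {(\<lambda>i. lab (p i)) | p. \<forall>i. p i \<in> E \<and> ter (p i) = ini (p (i + 1))}"
    using assms(1) unfolding sofic_def by (elim exE conjE)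
  have hm: "homeomorphic_map (subtopology shift_top X) (subtopology shift_top X) \<phi>"
    and sh: "\<forall>x\<in>X. \<phi> (shift x) = shift_inv (\<phi> x)" and pp: "\<forall>x\<in>X. \<phi> (\<phi> x) = x"
    using assms(2) unfolding is_flip_def by blast+
  have ts: "topspace (subtopology shift_top X) = X" by (simp add: shift_top_def)
  have phiX: "\<phi> x \<in> X" if "x \<in> X" for x
    using homeomorphic_imp_surjective_map[OF hm] that ts by blast
  have cX: "compactin shift_top X" unfolding Xd by (rule sofic_compact[OF fE])
  obtain N where N: "\<forall>x\<in>X. \<forall>z\<in>X. (\<forall>t. \<bar>t\<bar> \<le> int N \<longrightarrow> x t = z t) \<longrightarrow> \<phi> x 0 = \<phi> z 0"
    using uc[OF cX homeomorphic_imp_continuous_map[OF hm]] by blast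
  have N': "\<And>x z. x \<in> X \<Longrightarrow> z \<in> X \<Longrightarrow> (\<forall>t. \<bar>t\<bar> \<le> int N \<longrightarrow> x t = z t) \<Longrightarrow> \<phi> x 0 = \<phi> z 0"
    using N by blast
  have sh': "\<And>x. x \<in> X \<Longrightarrow> \<phi> (shift x) = shift_inv (\<phi> x)" using sh by blast
  have pp': "\<And>x. x \<in> X \<Longrightarrow> \<phi> (\<phi> x) = x" using pp by blast
  interpret FS E ini ter lab X \<phi> N
    by (rule FS.intro[OF fE Xd phiX pp' sh' N'])
  show ?thesis
  proof (rule transfer[where T=T and Lc=Lc and Ac=Ac and tauc=tauc])
    show "finite T" by (rule finite_T)
    show "\<And>a. a \<in> T \<Longrightarrow> tauc a \<in> T" by (rule T_tauc)
    show "\<And>a. a \<in> T \<Longrightarrow> tauc (tauc a) = a" by (rule tauc_tauc)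
    show "\<And>a b. a \<in> T \<Longrightarrow> b \<in> T \<Longrightarrow> Ac a b \<Longrightarrow> Ac (tauc b) (tauc a)" by (rule Ac_tauc)
    show "Lc ` T \<subseteq> B1 X"
    proof
      fix b assume "b \<in> Lc ` T"
      then obtain x j where "x \<in> X" "b = Lc (st x j)" unfolding T_def by blast
      then show "b \<in> B1 X" unfolding B1_def Lc_st by blast
    qed
    show "{(\<lambda>i. Lc (y i)) | y. \<forall>i. y i \<in> T \<and> Ac (y i) (y (i+1))} = X"
      using image_path unfolding path_def .
    show "\<And>n as bs. length as = n+1 \<Longrightarrow> length bs = n+1 \<Longrightarrow> set as \<subseteq> T \<Longrightarrow> set bs \<subseteq> T \<Longrightarrow>
      \<forall>i<n. Ac (as!i) (as!(i+1)) \<and> Ac (bs!i) (bs!(i+1)) \<Longrightarrow> as!0 = bs!0 \<Longrightarrow> as!n = bs!n \<Longrightarrow>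
      \<forall>i\<le>n. Lc (as!i) = Lc (bs!i) \<Longrightarrow> as = bs" by (rule nodiam)
    show "\<And>y. \<forall>i. y i \<in> T \<and> Ac (y i) (y (i+1)) \<Longrightarrow> (\<lambda>i. Lc (tauc (y (-i)))) = \<phi> (\<lambda>i. Lc (y i))"
      using path_flip unfolding path_def .
    show "\<And>\<delta> x. \<delta> \<in> {0,1::nat} \<Longrightarrow> x \<in> X \<Longrightarrow> (shift ^^ \<delta>) (\<phi> x) = x \<Longrightarrow>
      \<exists>y. (\<forall>i. y i \<in> T \<and> Ac (y i) (y (i+1))) \<and> (\<lambda>i. Lc (y i)) = x \<and> (shift ^^ \<delta>) (\<lambda>i. tauc (y (-i))) = y"
      using fix_lift unfolding path_def .
  qed
qed

end
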